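(* Let $F$ be a global function field with full constant field $k=\mathbb{F}_q$, let $x\in F$ be transcendental over $k$ with $n=[F:k(x)]$ and $\gcd(n,q)=1$, and let $S=\{P_1,\dots,P_{|S|}\}$ be a finite set of places of $F$ containing all infinite places of $F/k(x)$. Let $M_S\in\mathbb{Z}^{(|S|-1)\times|S|}$ be an integer matrix whose rows form an LLL-reduced basis of the $S$-unit valuation lattice $\Lambda_S'$ (this is the output of the paper's algorithm SValMat on input $S$). Then \[ \|M_S\|_\infty:=\max_{i,j}|(M_S)_{ij}| \le 2^{(|S|-1)(|S|-2)/4}\,R_S'. \]
   Context: The infinite places of $F/k(x)$ are the poles of $x$. For a finite set $S$ of places containing all infinite places, $O_S^\times$ denotes the group of $S$-units of $F$ (elements whose divisor is supported on $S$). With a fixed ordering $P_1,\dots,P_{|S|}$ of $S$, let $\phi_S:F^\times\to\mathbb{Z}^{|S|}$, $\alpha\mapsto(-v_{P_1}(\alpha),\dots,-v_{P_{|S|}}(\alpha))$, where $v_P$ is the normalized discrete valuation at $P$. The $S$-unit valuation lattice is $\Lambda_S'=\phi_S(O_S^\times)$, a lattice of rank $|S|-1$ in $\mathbb{Z}^{|S|}$, and $R_S'=\det\Lambda_S'$ is its determinant (covolume). LLL-reduced is meant in the sense of Lenstra–Lenstra–Lovász. *)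

theory Defs
  imports Complex_Main "HOL-Computational_Algebra.Polynomial" "HOL-Combinatorics.Permutations"
begin

text \<open>The global function field F is the ambient field type 'f (F = UNIV);
  the constant field k is a subset K of it.\<close>

definition subfield :: "'f::field set \<Rightarrow> bool" where
  "subfield K \<longleftrightarrow> 0 \<in> K \<and> 1 \<in> K \<and>
     (\<forall>a\<in>K. \<forall>b\<in>K. a + b \<in> K \<and> a * b \<in> K) \<and>
     (\<forall>a\<in>K. - a \<in> K \<and> inverse a \<in> K)"

definition poly_over :: "'f::field set \<Rightarrow> 'f poly \<Rightarrow> bool" where
  "poly_over K p \<longleftrightarrow> (\<forall>i. coeff p i \<in> K)"

definition algebraic_over :: "'f::field set \<Rightarrow> 'f \<Rightarrow> bool" where
  "algebraic_over K a \<longleftrightarrow> (\<exists>p. p \<noteq> 0 \<and> poly_over K p \<and> poly p a = 0)"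

definition rat_fun_field :: "'f::field set \<Rightarrow> 'f \<Rightarrow> 'f set" where
  "rat_fun_field K x = {poly p x / poly q x | p q. poly_over K p \<and> poly_over K q \<and> poly q x \<noteq> 0}"

definition has_degree_over :: "'f::field set \<Rightarrow> nat \<Rightarrow> bool" where
  "has_degree_over L n \<longleftrightarrow> (\<exists>bs::'f list. length bs = n \<and>
     (\<forall>c. (\<forall>i<n. c i \<in> L) \<and> (\<Sum>i<n. c i * bs ! i) = 0 \<longrightarrow> (\<forall>i<n. c i = 0)) \<and>
     (\<forall>a. \<exists>c. (\<forall>i<n. c i \<in> L) \<and> a = (\<Sum>i<n. c i * bs ! i)))"

text \<open>Places of F/k are identified with their normalized discrete valuations
  v : F \<Rightarrow> int (trivial on k), with the convention v 0 = 0.\<close>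
definition norm_val :: "'f::field set \<Rightarrow> ('f \<Rightarrow> int) \<Rightarrow> bool" where
  "norm_val K v \<longleftrightarrow> v 0 = 0 \<and>
     (\<forall>a b. a \<noteq> 0 \<longrightarrow> b \<noteq> 0 \<longrightarrow> v (a * b) = v a + v b) \<and>
     (\<forall>a b. a \<noteq> 0 \<longrightarrow> b \<noteq> 0 \<longrightarrow> a + b \<noteq> 0 \<longrightarrow> v (a + b) \<ge> min (v a) (v b)) \<and>
     (\<exists>t. t \<noteq> 0 \<and> v t = 1) \<and>
     (\<forall>c\<in>K. c \<noteq> 0 \<longrightarrow> v c = 0)"

definition S_units :: "'f::field set \<Rightarrow> ('f \<Rightarrow> int) list \<Rightarrow> 'f set" where
  "S_units K Ps = {\<alpha>. \<alpha> \<noteq> 0 \<and> (\<forall>v. norm_val K v \<and> v \<notin> set Ps \<longrightarrow> v \<alpha> = 0)}"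

text \<open>phi_S, vectors in Z^|S| represented as nat \<Rightarrow> int, zero outside {..<|S|}.\<close>
definition phi_S :: "('f \<Rightarrow> int) list \<Rightarrow> 'f \<Rightarrow> (nat \<Rightarrow> int)" where
  "phi_S Ps \<alpha> = (\<lambda>i. if i < length Ps then - (Ps ! i) \<alpha> else 0)"

definition S_unit_val_lattice :: "'f::field set \<Rightarrow> ('f \<Rightarrow> int) list \<Rightarrow> (nat \<Rightarrow> int) set" where
  "S_unit_val_lattice K Ps = phi_S Ps ` S_units K Ps"

text \<open>Lattices: B i (i < r) are the basis vectors.\<close>
definition int_comb :: "nat \<Rightarrow> (nat \<Rightarrow> nat \<Rightarrow> int) \<Rightarrow> (nat \<Rightarrow> int) \<Rightarrow> (nat \<Rightarrow> int)" where
  "int_comb r B c = (\<lambda>j. \<Sum>i<r. c i * B i j)"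

definition is_lattice_basis :: "(nat \<Rightarrow> int) set \<Rightarrow> nat \<Rightarrow> (nat \<Rightarrow> nat \<Rightarrow> int) \<Rightarrow> bool" where
  "is_lattice_basis L r B \<longleftrightarrow> (\<forall>i<r. B i \<in> L) \<and>
     (\<forall>c. int_comb r B c = (\<lambda>j. 0) \<longrightarrow> (\<forall>i<r. c i = 0)) \<and>
     (\<forall>w\<in>L. \<exists>c. w = int_comb r B c)"

definition ip :: "nat \<Rightarrow> (nat \<Rightarrow> real) \<Rightarrow> (nat \<Rightarrow> real) \<Rightarrow> real" where
  "ip m u w = (\<Sum>k<m. u k * w k)"

definition rvec :: "(nat \<Rightarrow> nat \<Rightarrow> int) \<Rightarrow> nat \<Rightarrow> (nat \<Rightarrow> real)" where
  "rvec B i = (\<lambda>k. real_of_int (B i k))"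

text \<open>Gram--Schmidt orthogonalisation: gso m B i = [b*_0, ..., b*_(i-1)].\<close>
primrec gso :: "nat \<Rightarrow> (nat \<Rightarrow> nat \<Rightarrow> int) \<Rightarrow> nat \<Rightarrow> (nat \<Rightarrow> real) list" where
  "gso m B 0 = []"
| "gso m B (Suc i) = (let prev = gso m B i in
     prev @ [(\<lambda>k. rvec B i k - (\<Sum>j<i. ip m (rvec B i) (prev ! j) / ip m (prev ! j) (prev ! j) * (prev ! j) k))])"

definition gs :: "nat \<Rightarrow> (nat \<Rightarrow> nat \<Rightarrow> int) \<Rightarrow> nat \<Rightarrow> (nat \<Rightarrow> real)" where
  "gs m B i = gso m B (Suc i) ! i"

definition gs_mu :: "nat \<Rightarrow> (nat \<Rightarrow> nat \<Rightarrow> int) \<Rightarrow> nat \<Rightarrow> nat \<Rightarrow> real" where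
  "gs_mu m B i j = ip m (rvec B i) (gs m B j) / ip m (gs m B j) (gs m B j)"

definition LLL_reduced :: "nat \<Rightarrow> nat \<Rightarrow> (nat \<Rightarrow> nat \<Rightarrow> int) \<Rightarrow> bool" where
  "LLL_reduced m r B \<longleftrightarrow>
     (\<forall>i<r. \<forall>j<i. \<bar>gs_mu m B i j\<bar> \<le> 1/2) \<and>
     (\<forall>i. 0 < i \<and> i < r \<longrightarrow>
        ip m (gs m B i) (gs m B i) \<ge> (3/4 - (gs_mu m B i (i - 1))^2) * ip m (gs m B (i - 1)) (gs m B (i - 1)))"

definition gram_det :: "nat \<Rightarrow> nat \<Rightarrow> (nat \<Rightarrow> nat \<Rightarrow> int) \<Rightarrow> real" where
  "gram_det m r B = (\<Sum>p \<in> {p. p permutes {..<r}}. of_int (sign p) * (\<Prod>i<r. ip m (rvec B i) (rvec B (p i))))"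

definition lattice_det :: "nat \<Rightarrow> (nat \<Rightarrow> int) set \<Rightarrow> real" where
  "lattice_det m L = (THE d. \<exists>r B. is_lattice_basis L r B \<and> d = sqrt (gram_det m r B))"

end

theory Submission
  imports Defs "Jordan_Normal_Form.Determinant"
begin

lemma gso_len: "length (gso m B i) = i"
  by (induction i) (auto simp: Let_def)

lemma gso_nth: "j < i \<Longrightarrow> gso m B i ! j = gs m B j"
proof (induction i)
  case 0 then show ?case by simp
next
  case (Suc i)
  show ?case
  proof (cases "j < i")
    case True
    then show ?thesis using Suc by (simp add: Let_def nth_append gso_len)
  next
    case False
    then have "j = i" using Suc by simp
    then show ?thesis by (simp add: gs_def)
  qed
qed

lemma gs_eq: "gs m B i = (\<lambda>k. rvec B i k - (\<Sum>j<i. gs_mu m B i j * gs m B j k))"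
proof -
  have "gs m B i = (\<lambda>k. rvec B i k - (\<Sum>j<i. ip m (rvec B i) (gso m B i ! j) / ip m (gso m B i ! j) (gso m B i ! j) * (gso m B i ! j) k))"
    by (simp add: gs_def Let_def nth_append gso_len)
  also have "\<dots> = (\<lambda>k. rvec B i k - (\<Sum>j<i. gs_mu m B i j * gs m B j k))"
    by (intro ext arg_cong2[where f="(-)"] refl sum.cong) (simp_all add: gso_nth gs_mu_def)
  finally show ?thesis .
qed

lemma ip_sym: "ip m u w = ip m w u"
  by (simp add: ip_def mult.commute)

lemma ip_zero: "ip m u u = 0 \<Longrightarrow> ip m w u = 0"
proof -
  assume h: "ip m u u = 0"
  have "\<forall>k\<in>{..<m}. u k * u k = 0"
    using h unfolding ip_def by (subst sum_nonneg_eq_0_iff[symmetric]) auto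
  then show ?thesis unfolding ip_def by simp
qed

lemma ip_nonneg: "ip m u u \<ge> 0"
  unfolding ip_def by (intro sum_nonneg) auto

lemma ip_lin: "ip m (\<lambda>k. a k - (\<Sum>j\<in>J. c j * v j k)) w = ip m a w - (\<Sum>j\<in>J. c j * ip m (v j) w)"
  unfolding ip_def
  by (simp add: sum_subtractf left_diff_distrib sum_distrib_left sum_distrib_right mult.assoc sum.swap[of _ J])

lemma gs_orth: "j < i \<Longrightarrow> ip m (gs m B i) (gs m B j) = 0"
proof (induction i arbitrary: j rule: less_induct)
  case (less i)
  have o: "ip m (gs m B l) (gs m B j) = 0" if "l < i" "l \<noteq> j" for l
  proof (cases "l < j")
    case True
    then show ?thesis using less.IH[of j l] less.prems by (simp add: ip_sym)
  next
    case False
    then show ?thesis using less.IH[of l j] that by simp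
  qed
  have "ip m (gs m B i) (gs m B j) = ip m (rvec B i) (gs m B j) - (\<Sum>l<i. gs_mu m B i l * ip m (gs m B l) (gs m B j))"
    by (subst gs_eq) (rule ip_lin)
  also have "(\<Sum>l<i. gs_mu m B i l * ip m (gs m B l) (gs m B j)) = gs_mu m B i j * ip m (gs m B j) (gs m B j)"
    using less.prems o by (subst sum.remove[of _ j]) (auto intro!: sum.neutral)
  finally show ?case
    by (cases "ip m (gs m B j) (gs m B j) = 0") (auto simp: gs_mu_def ip_zero)
qed

definition Lmu :: "nat \<Rightarrow> (nat \<Rightarrow> nat \<Rightarrow> int) \<Rightarrow> nat \<Rightarrow> nat \<Rightarrow> real" where
  "Lmu m B i j = (if j < i then gs_mu m B i j else if i = j then 1 else 0)"

lemma rvec_decomp: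
  assumes "i < r"
  shows "rvec B i k = (\<Sum>j<r. Lmu m B i j * gs m B j k)"
proof -
  have "(\<Sum>j<r. Lmu m B i j * gs m B j k) = (\<Sum>j<Suc i. Lmu m B i j * gs m B j k)"
    using assms by (intro sum.mono_neutral_right) (auto simp: Lmu_def)
  also have "\<dots> = gs m B i k + (\<Sum>j<i. gs_mu m B i j * gs m B j k)"
    by (simp add: Lmu_def)
  also have "\<dots> = rvec B i k"
    by (subst gs_eq) simp
  finally show ?thesis by simp
qed

definition BR :: "nat \<Rightarrow> nat \<Rightarrow> (nat \<Rightarrow> nat \<Rightarrow> int) \<Rightarrow> real mat" where
  "BR m r B = mat r m (\<lambda>(i,k). rvec B i k)"
definition GR :: "nat \<Rightarrow> nat \<Rightarrow> (nat \<Rightarrow> nat \<Rightarrow> int) \<Rightarrow> real mat" where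
  "GR m r B = mat r m (\<lambda>(i,k). gs m B i k)"
definition LR :: "nat \<Rightarrow> nat \<Rightarrow> (nat \<Rightarrow> nat \<Rightarrow> int) \<Rightarrow> real mat" where
  "LR m r B = mat r r (\<lambda>(i,j). Lmu m B i j)"
definition DR :: "nat \<Rightarrow> nat \<Rightarrow> (nat \<Rightarrow> nat \<Rightarrow> int) \<Rightarrow> real mat" where
  "DR m r B = mat r r (\<lambda>(i,j). if i = j then ip m (gs m B i) (gs m B i) else 0)"
definition gramR :: "nat \<Rightarrow> nat \<Rightarrow> (nat \<Rightarrow> nat \<Rightarrow> int) \<Rightarrow> real mat" where
  "gramR m r B = mat r r (\<lambda>(i,j). ip m (rvec B i) (rvec B j))"

lemma carriers[simp]: "BR m r B \<in> carrier_mat r m" "GR m r B \<in> carrier_mat r m"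
  "LR m r B \<in> carrier_mat r r" "DR m r B \<in> carrier_mat r r" "gramR m r B \<in> carrier_mat r r"
  by (auto simp: BR_def GR_def LR_def DR_def gramR_def)

lemma dims[simp]: "dim_row (LR m r B) = r" "dim_col (LR m r B) = r" "dim_row (DR m r B) = r" "dim_col (DR m r B) = r"
  "dim_row (GR m r B) = r" "dim_col (GR m r B) = m" "dim_row (BR m r B) = r" "dim_col (BR m r B) = m"
  by (auto simp: BR_def GR_def LR_def DR_def)

lemma LR_entry: "i < r \<Longrightarrow> j < r \<Longrightarrow> LR m r B $$ (i,j) = Lmu m B i j"
  by (simp add: LR_def)

lemma F1: "BR m r B = LR m r B * GR m r B"
  by (rule eq_matI) (auto simp: BR_def GR_def LR_def scalar_prod_def atLeast0LessThan rvec_decomp)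

lemma F2: "GR m r B * transpose_mat (GR m r B) = DR m r B"
proof (rule eq_matI)
  fix i j assume "i < dim_row (DR m r B)" "j < dim_col (DR m r B)"
  then have ij: "i < r" "j < r" by (auto simp: DR_def)
  have "(GR m r B * transpose_mat (GR m r B)) $$ (i,j) = ip m (gs m B i) (gs m B j)"
    using ij by (simp add: GR_def scalar_prod_def atLeast0LessThan ip_def)
  also have "\<dots> = DR m r B $$ (i,j)"
    using ij gs_orth[of j i m B] gs_orth[of i j m B] by (cases "i = j") (auto simp: DR_def ip_sym linorder_neq_iff)
  finally show "(GR m r B * transpose_mat (GR m r B)) $$ (i,j) = DR m r B $$ (i,j)" .
qed (auto simp: GR_def DR_def)

lemma F3: "gramR m r B = BR m r B * transpose_mat (BR m r B)"
  by (rule eq_matI) (auto simp: BR_def gramR_def scalar_prod_def atLeast0LessThan ip_def)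

lemma F4: "gramR m r B = LR m r B * DR m r B * transpose_mat (LR m r B)"
proof -
  have "gramR m r B = (LR m r B * GR m r B) * transpose_mat (LR m r B * GR m r B)"
    by (simp add: F1[symmetric] F3)
  also have "\<dots> = (LR m r B * GR m r B) * (transpose_mat (GR m r B) * transpose_mat (LR m r B))"
    by (simp add: transpose_mult[of _ r r _ m])
  also have "\<dots> = LR m r B * (GR m r B * (transpose_mat (GR m r B) * transpose_mat (LR m r B)))"
    by (rule assoc_mult_mat[of _ r r _ m _ r]) (auto intro: mult_carrier_mat[of _ m r])
  also have "GR m r B * (transpose_mat (GR m r B) * transpose_mat (LR m r B)) = (GR m r B * transpose_mat (GR m r B)) * transpose_mat (LR m r B)"
    by (rule assoc_mult_mat[of _ r m _ r _ r, symmetric]) auto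
  also have "LR m r B * \<dots> = LR m r B * (GR m r B * transpose_mat (GR m r B)) * transpose_mat (LR m r B)"
    by (rule assoc_mult_mat[of _ r r _ r _ r, symmetric]) (auto intro: mult_carrier_mat[of _ r m])
  finally show ?thesis by (simp add: F2)
qed

lemma det_LR: "det (LR m r B) = 1"
proof -
  have "det (LR m r B) = prod_list (diag_mat (LR m r B))"
    by (rule det_lower_triangular[of r]) (auto simp: LR_def Lmu_def)
  also have "\<dots> = 1"
    by (simp add: diag_mat_def LR_def Lmu_def prod.distinct_set_conv_list[symmetric] atLeast0LessThan)
  finally show ?thesis .
qed

lemma det_DR: "det (DR m r B) = (\<Prod>i<r. ip m (gs m B i) (gs m B i))"
proof -
  have "det (DR m r B) = prod_list (diag_mat (DR m r B))"
    by (rule det_upper_triangular[of _ r]) (auto simp: DR_def upper_triangular_def)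
  also have "\<dots> = (\<Prod>i<r. ip m (gs m B i) (gs m B i))"
    by (simp add: diag_mat_def DR_def prod.distinct_set_conv_list[symmetric] atLeast0LessThan cong: map_cong)
  finally show ?thesis .
qed

lemma det_gramR: "det (gramR m r B) = (\<Prod>i<r. ip m (gs m B i) (gs m B i))"
proof -
  have "det (gramR m r B) = det (LR m r B * DR m r B) * det (transpose_mat (LR m r B))"
    by (simp add: F4 det_mult[OF mult_carrier_mat[OF carriers(3) carriers(4)]])
  also have "\<dots> = det (LR m r B) * det (DR m r B) * det (LR m r B)"
    by (simp add: det_mult[OF carriers(3) carriers(4)] det_transpose[OF carriers(3)])
  finally show ?thesis by (simp add: det_LR det_DR)
qed

lemma gram_det_eq: "gram_det m r B = det (gramR m r B)"
  unfolding gram_det_def det_def' [OF carriers(5)] atLeast0LessThan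
proof (intro sum.cong refl arg_cong2[where f="(*)"] prod.cong)
  fix p i assume "p \<in> {p. p permutes {..<r}}" "i \<in> {..<r}"
  then have "p i < r" "i < r" using permutes_in_image[of p "{..<r}" i] by auto
  then show "ip m (rvec B i) (rvec B (p i)) = gramR m r B $$ (i, p i)" by (simp add: gramR_def)
qed

lemma LD_entry:
  assumes "i < r" "j < r"
  shows "(LR m r B * DR m r B) $$ (i,j) = Lmu m B i j * ip m (gs m B j) (gs m B j)"
proof -
  have "(LR m r B * DR m r B) $$ (i,j) = (\<Sum>k\<in>{..<r}. Lmu m B i k * (if k = j then ip m (gs m B j) (gs m B j) else 0))"
    using assms by (simp add: LR_def DR_def scalar_prod_def atLeast0LessThan cong: if_cong)
  also have "\<dots> = Lmu m B i j * ip m (gs m B j) (gs m B j)"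
    using assms by (simp add: if_distrib cong: if_cong)
  finally show ?thesis .
qed

lemma norm_b:
  assumes "i < r"
  shows "ip m (rvec B i) (rvec B i) = (\<Sum>j<r. (Lmu m B i j)^2 * ip m (gs m B j) (gs m B j))"
proof -
  have "ip m (rvec B i) (rvec B i) = gramR m r B $$ (i,i)" using assms by (simp add: gramR_def)
  also have "\<dots> = (LR m r B * DR m r B * transpose_mat (LR m r B)) $$ (i,i)" by (simp add: F4[symmetric])
  also have "\<dots> = (\<Sum>j<r. (Lmu m B i j)^2 * ip m (gs m B j) (gs m B j))"
  proof -
    have "(LR m r B * DR m r B * transpose_mat (LR m r B)) $$ (i,i) = (\<Sum>j\<in>{0..<r}. (LR m r B * DR m r B) $$ (i,j) * LR m r B $$ (i,j))"
      using assms by (auto simp add: scalar_prod_def intro!: sum.cong)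
    also have "\<dots> = (\<Sum>j<r. (Lmu m B i j)^2 * ip m (gs m B j) (gs m B j))"
      using assms by (intro sum.cong) (auto simp del: index_mult_mat simp: LD_entry LR_entry power2_eq_square)
    finally show ?thesis .
  qed
  finally show ?thesis .
qed


lemma inv_dim:
  fixes X Y :: "nat \<Rightarrow> nat \<Rightarrow> int"
  assumes h: "\<forall>i<a. \<forall>l<a. (\<Sum>j<b. X i j * Y j l) = (if i = l then 1 else 0)"
  shows "a \<le> b"
proof (rule ccontr)
  assume "\<not> a \<le> b"
  then have ba: "b < a" by simp
  define X' where "X' = mat a a (\<lambda>(i,j). if j < b then X i j else 0)"
  define Y' where "Y' = mat a a (\<lambda>(i,j). if i < b then Y i j else 0)"
  have cX: "X' \<in> carrier_mat a a" and cY: "Y' \<in> carrier_mat a a" by (auto simp: X'_def Y'_def)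
  have "X' * Y' = 1\<^sub>m a"
  proof (rule eq_matI)
    fix i l assume il: "i < dim_row (1\<^sub>m a)" "l < dim_col (1\<^sub>m a)"
    then have il': "i < a" "l < a" by auto
    have "(X' * Y') $$ (i,l) = (\<Sum>j\<in>{0..<a}. (if j < b then X i j else 0) * (if j < b then Y j l else 0))"
      using il' by (simp add: X'_def Y'_def scalar_prod_def)
    also have "\<dots> = (\<Sum>j\<in>{..<b}. X i j * Y j l)"
      using ba by (intro sum.mono_neutral_cong_right) auto
    also have "\<dots> = 1\<^sub>m a $$ (i,l)" using h il' by simp
    finally show "(X' * Y') $$ (i,l) = 1\<^sub>m a $$ (i,l)" .
  qed (auto simp: X'_def Y'_def)
  then have "det X' * det Y' = 1" using det_mult[OF cX cY] by simp
  moreover have "det Y' = 0"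
    unfolding det_def'[OF cY]
  proof (intro sum.neutral ballI)
    fix p assume "p \<in> {p. p permutes {0..<a}}"
    then have "p b < a" using permutes_in_image[of p "{0..<a}" b] ba by auto
    then have "Y' $$ (b, p b) = 0" using ba by (simp add: Y'_def)
    then have "(\<Prod>i = 0..<a. Y' $$ (i, p i)) = 0" using ba by (intro prod_zero) auto
    then show "signof p * (\<Prod>i = 0..<a. Y' $$ (i, p i)) = 0" by simp
  qed
  ultimately show False by simp
qed

lemma comp_id:
  assumes A: "\<forall>i<a. A i = int_comb b A' (X i)" and A': "\<forall>j<b. A' j = int_comb a A (Y j)"
    and ind: "\<forall>c. int_comb a A c = (\<lambda>j. 0) \<longrightarrow> (\<forall>i<a. c i = 0)"
  shows "\<forall>i<a. \<forall>l<a. (\<Sum>j<b. X i j * Y j l) = (if i = l then 1 else 0)"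
proof (intro allI impI)
  fix i l assume i: "i < a" and l: "l < a"
  define c where "c l = (\<Sum>j<b. X i j * Y j l) - (if i = l then 1 else 0)" for l
  have "int_comb a A c = (\<lambda>j. 0)"
  proof
    fix k
    have "int_comb a A c k = (\<Sum>l<a. (\<Sum>j<b. X i j * Y j l) * A l k) - (\<Sum>l<a. (if i = l then 1 else 0) * A l k)"
      by (simp add: int_comb_def c_def left_diff_distrib sum_subtractf)
    also have "(\<Sum>l<a. (if i = l then 1 else 0) * A l k) = A i k"
    proof -
      have "(\<Sum>l<a. (if i = l then 1 else 0) * A l k) = (\<Sum>l<a. if i = l then A l k else 0)"
        by (intro sum.cong) auto
      then show ?thesis using i by simp
    qed
    also have "(\<Sum>l<a. (\<Sum>j<b. X i j * Y j l) * A l k) = (\<Sum>j<b. X i j * (\<Sum>l<a. Y j l * A l k))"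
      by (simp add: sum_distrib_left sum_distrib_right mult.assoc sum.swap[of _ "{..<a}"])
    also have "\<dots> = (\<Sum>j<b. X i j * A' j k)"
      using A' by (intro sum.cong) (auto simp: int_comb_def)
    also have "\<dots> = A i k"
      using A i by (simp add: int_comb_def)
    finally show "int_comb a A c k = 0" by simp
  qed
  then have "c l = 0" using ind l by blast
  then show "(\<Sum>j<b. X i j * Y j l) = (if i = l then 1 else 0)" by (simp add: c_def)
qed

definition BI :: "nat \<Rightarrow> nat \<Rightarrow> (nat \<Rightarrow> nat \<Rightarrow> int) \<Rightarrow> int mat" where
  "BI m r B = mat r m (\<lambda>(i,k). B i k)"

lemma BI_carrier[simp]: "BI m r B \<in> carrier_mat r m" by (simp add: BI_def)
lemma BI_dims[simp]: "dim_row (BI m r B) = r" "dim_col (BI m r B) = m" by (simp_all add: BI_def)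

lemma gram_det_int: "gram_det m r B = of_int (det (BI m r B * transpose_mat (BI m r B)))"
proof -
  have "gramR m r B = map_mat of_int (BI m r B * transpose_mat (BI m r B))"
    by (rule eq_matI) (auto simp: gramR_def BI_def ip_def rvec_def scalar_prod_def atLeast0LessThan)
  then show ?thesis by (simp add: gram_det_eq of_int_hom.hom_det)
qed

lemma basis_inv:
  assumes b1: "is_lattice_basis L r B" and b2: "is_lattice_basis L r' B'"
  shows "gram_det m r' B' = gram_det m r B"
proof -
  have "\<forall>i. \<exists>c. i < r' \<longrightarrow> B' i = int_comb r B c" using b1 b2 unfolding is_lattice_basis_def by blast
  then obtain T where T: "\<forall>i<r'. B' i = int_comb r B (T i)" by metis
  have "\<forall>i. \<exists>c. i < r \<longrightarrow> B i = int_comb r' B' c" using b1 b2 unfolding is_lattice_basis_def by blast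
  then obtain U where U: "\<forall>i<r. B i = int_comb r' B' (U i)" by metis
  have ind1: "\<forall>c. int_comb r B c = (\<lambda>j. 0) \<longrightarrow> (\<forall>i<r. c i = 0)" using b1 by (simp add: is_lattice_basis_def)
  have ind2: "\<forall>c. int_comb r' B' c = (\<lambda>j. 0) \<longrightarrow> (\<forall>i<r'. c i = 0)" using b2 by (simp add: is_lattice_basis_def)
  have UT: "\<forall>i<r. \<forall>l<r. (\<Sum>j<r'. U i j * T j l) = (if i = l then 1 else 0)"
    by (rule comp_id[OF U T ind1])
  have TU: "\<forall>i<r'. \<forall>l<r'. (\<Sum>j<r. T i j * U j l) = (if i = l then 1 else 0)"
    by (rule comp_id[OF T U ind2])
  have rr: "r' = r" using inv_dim[OF UT] inv_dim[OF TU] by simp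
  define TI where "TI = mat r r (\<lambda>(i,j). T i j)"
  define UI where "UI = mat r r (\<lambda>(i,j). U i j)"
  have cT: "TI \<in> carrier_mat r r" and cU: "UI \<in> carrier_mat r r" by (auto simp: TI_def UI_def)
  have "UI * TI = 1\<^sub>m r"
    by (rule eq_matI) (use UT rr in \<open>auto simp: UI_def TI_def scalar_prod_def atLeast0LessThan\<close>)
  then have "det UI * det TI = 1" using det_mult[OF cU cT] by simp
  then have dT: "det TI * det TI = 1" by (auto simp: zmult_eq_1_iff)
  have BB: "BI m r B' = TI * BI m r B"
  proof (rule eq_matI)
    fix i k assume "i < dim_row (TI * BI m r B)" "k < dim_col (TI * BI m r B)"
    then have ik: "i < r" "k < m" using cT by auto
    then show "BI m r B' $$ (i,k) = (TI * BI m r B) $$ (i,k)"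
      using T rr by (simp add: BI_def TI_def scalar_prod_def atLeast0LessThan int_comb_def)
  qed (use cT in auto)
  have "BI m r B' * transpose_mat (BI m r B') = TI * (BI m r B * transpose_mat (BI m r B)) * transpose_mat TI"
  proof -
    have "BI m r B' * transpose_mat (BI m r B') = (TI * BI m r B) * (transpose_mat (BI m r B) * transpose_mat TI)"
      by (simp add: BB transpose_mult[OF cT BI_carrier])
    also have "\<dots> = TI * (BI m r B * (transpose_mat (BI m r B) * transpose_mat TI))"
      by (rule assoc_mult_mat[OF cT BI_carrier]) (use cT in \<open>auto intro: mult_carrier_mat[of _ m r]\<close>)
    also have "BI m r B * (transpose_mat (BI m r B) * transpose_mat TI) = (BI m r B * transpose_mat (BI m r B)) * transpose_mat TI"
      by (rule assoc_mult_mat[symmetric]) (use cT in auto)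
    also have "TI * \<dots> = TI * (BI m r B * transpose_mat (BI m r B)) * transpose_mat TI"
      by (rule assoc_mult_mat[symmetric]) (use cT in \<open>auto intro: mult_carrier_mat[of _ r m]\<close>)
    finally show ?thesis .
  qed
  moreover have "BI m r B * transpose_mat (BI m r B) \<in> carrier_mat r r" by (auto intro: mult_carrier_mat[of _ r m])
  ultimately have "det (BI m r B' * transpose_mat (BI m r B')) = det TI * det (BI m r B * transpose_mat (BI m r B)) * det TI"
    using cT by (simp add: det_mult[of _ r] det_transpose[OF cT] mult_carrier_mat[of _ r r])
  then have "det (BI m r B' * transpose_mat (BI m r B')) = det (BI m r B * transpose_mat (BI m r B))"
    using dT by (metis mult.commute mult.left_neutral mult.assoc)
  then show ?thesis using rr by (simp add: gram_det_int)
qed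


lemma geom2: "(\<Sum>j<i. (2::real)^(i-j)) = 2^(i+1) - 2"
proof (induction i)
  case 0 then show ?case by simp
next
  case (Suc i)
  have "(\<Sum>j<Suc i. (2::real)^(Suc i-j)) = (\<Sum>j<i. 2 * 2^(i-j)) + 2"
    by (simp add: Suc_diff_le)
  also have "\<dots> = 2 * (2^(i+1) - 2) + 2" by (simp add: sum_distrib_left[symmetric] Suc)
  finally show ?case by simp
qed

lemma gauss2: "2 * (\<Sum>k<r. k) = r * (r - 1::nat)"
proof (induction r)
  case (Suc r)
  have "2 * (\<Sum>k<Suc r. k) = r * (r - 1) + 2 * r" using Suc by simp
  then show ?case by (cases r) auto
qed simp

lemma gs0: "gs m B 0 = rvec B 0"
  by (subst gs_eq) simp

lemma mu_sq: assumes "\<bar>x::real\<bar> \<le> 1/2" shows "x^2 \<le> 1/4"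
proof -
  have "\<bar>x\<bar>^2 \<le> (1/2)^2" using assms by (intro power_mono) auto
  then show ?thesis by (simp add: power2_eq_square)
qed

lemma main_bound:
  assumes LLL: "LLL_reduced m r B" and B0: "0 < r \<Longrightarrow> ip m (rvec B 0) (rvec B 0) \<ge> 1"
    and i: "i < r" and j: "j < m"
  shows "(real_of_int (B i j))^2 \<le> 2^(\<Sum>k<r. k) * gram_det m r B"
proof -
  define D where "D k = ip m (gs m B k) (gs m B k)" for k
  have D0: "D k \<ge> 0" for k by (simp add: D_def ip_nonneg)
  have mu: "(gs_mu m B i' j')^2 \<le> 1/4" if "i' < r" "j' < i'" for i' j'
    using LLL that unfolding LLL_reduced_def by (intro mu_sq) auto
  have step: "D (i' - 1) \<le> 2 * D i'" if "0 < i'" "i' < r" for i'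
  proof -
    have "D i' \<ge> (3/4 - (gs_mu m B i' (i' - 1))^2) * D (i' - 1)"
      using LLL that unfolding LLL_reduced_def D_def by auto
    moreover have "(3/4 - (gs_mu m B i' (i' - 1))^2) * D (i' - 1) \<ge> 1/2 * D (i' - 1)"
      using mu[of i' "i' - 1"] that D0[of "i' - 1"] by (intro mult_right_mono) auto
    ultimately show ?thesis by simp
  qed
  have chain: "D j' \<le> 2^(i'-j') * D i'" if "j' \<le> i'" "i' < r" for i' j'
    using that
  proof (induction i' rule: dec_induct)
    case base then show ?case by simp
  next
    case (step n)
    have "D j' \<le> 2^(n-j') * D n" using step by simp
    also have "\<dots> \<le> 2^(n-j') * (2 * D (Suc n))"
      using step.prems step(1,2) using \<open>\<And>i'. 0 < i' \<Longrightarrow> i' < r \<Longrightarrow> D (i' - 1) \<le> 2 * D i'\<close>[of "Suc n"]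
      by (intro mult_left_mono) auto
    also have "\<dots> = 2^(Suc n - j') * D (Suc n)" using step(1) by (simp add: Suc_diff_le)
    finally show ?case .
  qed
  have lowD: "1 \<le> 2^k * D k" if "k < r" for k
  proof -
    have "1 \<le> D 0" using B0 that by (simp add: D_def gs0)
    also have "\<dots> \<le> 2^k * D k" using chain[of 0 k] that by simp
    finally show ?thesis .
  qed
  have nb: "ip m (rvec B i) (rvec B i) \<le> 2^i * D i"
  proof -
    have "ip m (rvec B i) (rvec B i) = (\<Sum>j<r. (Lmu m B i j)^2 * D j)"
      using norm_b[OF i] by (simp add: D_def)
    also have "\<dots> = (\<Sum>j<Suc i. (Lmu m B i j)^2 * D j)"
      using i by (intro sum.mono_neutral_right) (auto simp: Lmu_def)
    also have "\<dots> = D i + (\<Sum>j<i. (gs_mu m B i j)^2 * D j)"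
      by (simp add: Lmu_def)
    also have "(\<Sum>j<i. (gs_mu m B i j)^2 * D j) \<le> (\<Sum>j<i. 1/4 * (2^(i-j) * D i))"
      using i mu chain D0 by (intro sum_mono mult_mono) auto
    also have "(\<Sum>j<i. 1/4 * (2^(i-j) * D i)) = 1/4 * D i * (\<Sum>j<i. (2::real)^(i-j))"
      by (simp add: sum_distrib_left mult_ac)
    also have "\<dots> = 1/4 * D i * (2^(i+1) - 2)" by (simp only: geom2)
    finally have "ip m (rvec B i) (rvec B i) \<le> D i + 1/4 * D i * (2^(i+1) - 2)"
      by simp
    also have "D i + 1/4 * D i * (2^(i+1) - 2) = D i * ((1 + 2^i)/2)"
      by (simp add: algebra_simps)
    also have "\<dots> \<le> D i * 2^i"
    proof (intro mult_left_mono D0)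
      have "(1::real) \<le> 2^i" by simp
      then show "(1 + 2^i) / 2 \<le> (2::real)^i" by simp
    qed
    finally show ?thesis by (simp add: mult.commute)
  qed
  have "(real_of_int (B i j))^2 \<le> ip m (rvec B i) (rvec B i)"
    unfolding ip_def rvec_def using j
    by (subst power2_eq_square, intro member_le_sum[of j "{..<m}" "\<lambda>k. real_of_int (B i k) * real_of_int (B i k)"]) auto
  also note nb
  also have "2^i * D i \<le> (\<Prod>k<r. 2^k * D k)"
  proof -
    have "(\<Prod>k<r. 2^k * D k) = 2^i * D i * (\<Prod>k\<in>{..<r}-{i}. 2^k * D k)"
      using i by (subst prod.remove[of _ i]) auto
    moreover have "1 \<le> (\<Prod>k\<in>{..<r}-{i}. 2^k * D k)"
      using lowD by (intro prod_ge_1) auto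
    moreover have "0 \<le> 2^i * D i" using D0 by simp
    ultimately show ?thesis by (metis mult_left_mono mult.right_neutral)
  qed
  also have "(\<Prod>k<r. 2^k * D k) = 2^(\<Sum>k<r. k) * gram_det m r B"
    by (simp add: prod.distrib power_sum gram_det_eq det_gramR D_def)
  finally show ?thesis .
qed


lemma powr_sq: "(2 powr (x/4) :: real)^2 = 2 powr (x/2)"
proof -
  have "(2 powr (x/4) :: real)^2 = 2 powr (x/4) * 2 powr (x/4)" by (simp add: power2_eq_square)
  also have "\<dots> = 2 powr (x/4 + x/4)" by (simp only: powr_add)
  finally show ?thesis by simp
qed

theorem proposition2p2:
  fixes K :: "'f::field set" and x :: 'f and q n :: nat
    and Ps :: "('f \<Rightarrow> int) list" and M :: "nat \<Rightarrow> nat \<Rightarrow> int"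
  assumes K_subfield: "subfield K"
    and K_finite: "finite K" and K_card: "card K = q"
    and full_const: "\<forall>a. algebraic_over K a \<longrightarrow> a \<in> K"
    and x_transc: "\<not> algebraic_over K x"
    and degree: "has_degree_over (rat_fun_field K x) n"
    and coprime: "gcd n q = 1"
    and Ps_places: "\<forall>v\<in>set Ps. norm_val K v"
    and Ps_distinct: "distinct Ps"
    and Ps_infinite: "\<forall>v. norm_val K v \<and> v x < 0 \<longrightarrow> v \<in> set Ps"
    and M_basis: "is_lattice_basis (S_unit_val_lattice K Ps) (length Ps - 1) M"
    and M_LLL: "LLL_reduced (length Ps) (length Ps - 1) M"
  shows "\<forall>i < length Ps - 1. \<forall>j < length Ps.
           real_of_int \<bar>M i j\<bar> \<le> 2 powr (real ((length Ps - 1) * (length Ps - 2)) / 4)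
              * lattice_det (length Ps) (S_unit_val_lattice K Ps)"
proof (intro allI impI)
  fix i j assume i: "i < length Ps - 1" and j: "j < length Ps"
  define m where "m = length Ps"
  define r where "r = m - 1"
  define L where "L = S_unit_val_lattice K Ps"
  have basis: "is_lattice_basis L r M" using M_basis by (simp add: L_def r_def m_def)
  have LLL: "LLL_reduced m r M" using M_LLL by (simp add: r_def m_def)
  have zeroL: "w k = 0" if "w \<in> L" "m \<le> k" for w k
    using that by (auto simp: L_def S_unit_val_lattice_def phi_S_def m_def)
  have ldet: "lattice_det m L = sqrt (gram_det m r M)"
    unfolding lattice_det_def
  proof (rule the_equality)
    show "\<exists>r' B. is_lattice_basis L r' B \<and> sqrt (gram_det m r M) = sqrt (gram_det m r' B)"
      using basis by blast
  next
    fix d assume "\<exists>r' B. is_lattice_basis L r' B \<and> d = sqrt (gram_det m r' B)"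
    then obtain r' B where "is_lattice_basis L r' B" "d = sqrt (gram_det m r' B)" by blast
    then show "d = sqrt (gram_det m r M)" using basis_inv[OF basis] by simp
  qed
  have B0: "ip m (rvec M 0) (rvec M 0) \<ge> 1" if "0 < r"
  proof -
    define c where "c = (\<lambda>i::nat. if i = 0 then (1::int) else 0)"
    have "int_comb r M c = M 0"
    proof
      fix k
      have "int_comb r M c k = (\<Sum>i<r. if i = 0 then M i k else 0)"
        unfolding int_comb_def by (intro sum.cong) (auto simp: c_def)
      then show "int_comb r M c k = M 0 k" using that by simp
    qed
    moreover have "\<not> (\<forall>i<r. c i = 0)" using that by (auto simp: c_def)
    ultimately have "M 0 \<noteq> (\<lambda>j. 0)" using basis unfolding is_lattice_basis_def by metis
    then obtain k where k: "M 0 k \<noteq> 0" by auto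
    have "M 0 \<in> L" using basis that unfolding is_lattice_basis_def by auto
    have km: "k < m"
    proof (rule ccontr)
      assume "\<not> k < m"
      then have "M 0 k = 0" using zeroL[of "M 0" k] \<open>M 0 \<in> L\<close> by simp
      with k show False by simp
    qed
    have "(1::real) \<le> (real_of_int (M 0 k))^2"
    proof -
      have "1 \<le> \<bar>M 0 k\<bar>" using k by simp
      then have "(1::int) * 1 \<le> \<bar>M 0 k\<bar> * \<bar>M 0 k\<bar>" by (intro mult_mono) auto
      then have "(1::int) \<le> (M 0 k)^2" by (simp add: power2_eq_square abs_mult_self_eq)
      then have "real_of_int 1 \<le> real_of_int ((M 0 k)^2)" by (simp only: of_int_le_iff)
      then show ?thesis by simp
    qed
    also have "\<dots> \<le> ip m (rvec M 0) (rvec M 0)"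
      unfolding ip_def rvec_def using km
      by (subst power2_eq_square, intro member_le_sum[of k "{..<m}" "\<lambda>j. real_of_int (M 0 j) * real_of_int (M 0 j)"]) auto
    finally show ?thesis .
  qed
  have i': "i < r" and j': "j < m" using i j by (auto simp: r_def m_def)
  have bnd: "(real_of_int (M i j))^2 \<le> 2^(\<Sum>k<r. k) * gram_det m r M"
    by (rule main_bound[OF LLL B0 i' j'])
  have g0: "gram_det m r M \<ge> 0"
    by (simp add: gram_det_eq det_gramR ip_nonneg prod_nonneg)
  define X where "X = real ((length Ps - 1) * (length Ps - 2))"
  have X: "X / 2 = real (\<Sum>k<r. k)"
  proof -
    have "2 * (\<Sum>k<r. k) = r * (r - 1)" by (rule gauss2)
    also have "r * (r - 1) = (length Ps - 1) * (length Ps - 2)"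
      unfolding r_def m_def by (simp only: diff_diff_left one_add_one)
    finally have "2 * (\<Sum>k<r. k) = (length Ps - 1) * (length Ps - 2)" .
    then show ?thesis unfolding X_def by (metis nonzero_mult_div_cancel_left of_nat_mult of_nat_numeral zero_neq_numeral)
  qed
  define Y where "Y = 2 powr (X / 4) * sqrt (gram_det m r M)"
  have Y0: "0 \<le> Y" using g0 by (simp add: Y_def)
  have "Y^2 = 2 powr (X/2) * gram_det m r M"
    using g0 by (simp add: Y_def power_mult_distrib powr_sq)
  also have "\<dots> = 2^(\<Sum>k<r. k) * gram_det m r M"
    unfolding X by (subst powr_realpow) simp_all
  finally have "(real_of_int \<bar>M i j\<bar>)^2 \<le> Y^2" using bnd by simp
  then have "real_of_int \<bar>M i j\<bar> \<le> Y" using Y0 by (rule power2_le_imp_le)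
  then show "real_of_int \<bar>M i j\<bar> \<le> 2 powr (real ((length Ps - 1) * (length Ps - 2)) / 4)
              * lattice_det (length Ps) (S_unit_val_lattice K Ps)"
    by (simp add: Y_def X_def ldet[unfolded m_def L_def] r_def m_def)
qed

end
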